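(* Let $M$ be the star matrix of a partition of the hypercube ${\bf Z}_q^n$ into subcubes all of the same dimension, and suppose $M$ contains a submatrix $T$ which is a transfractal. Then all rows of $M$ that pass through $T$ coincide in every column of $M$ not belonging to $T$; that is, for every column $s$ of $M$ not among the columns of $T$, all rows of $T$ have the same entry (the same element of ${\bf Z}_q\cup\{*\}$) in column $s$.
   Context: A subcube of ${\bf Z}_q^n$ is obtained by fixing some coordinates and letting the others run through ${\bf Z}_q$; its dimension is the number of free coordinates, and its star pattern is the vector over ${\bf Z}_q\cup\{*\}$ with the fixed values in fixed coordinates and $*$ in free ones. The star matrix of a partition of ${\bf Z}_q^n$ into subcubes is the matrix whose rows are the star patterns of the subcubes. Fractal matrices: $M_{q,0}$ has one row and zero columns; for $m\ge1$, $M_{q,m}$ consists of $q$ horizontal blocks indexed by $a=0,\dots,q-1$, each with $q^{m-1}$ rows; its first column has entry $a$ in every row of block $a$; its remaining columns are divided into $q$ vertical stripes of width equal to the number of columns of $M_{q,m-1}$, and in block $a$ the $a$-th stripe is a copy of $M_{q,m-1}$ while other stripes of block $a$ are all $*$. A fractal matrix is any matrix obtained from some $M_{q,m}$ ($m\ge1$) by permuting rows and columns. A submatrix $T$ of $M$ (given by a set of rows and a set of columns, not necessarily consecutive) is a transfractal if $T$ is a fractal matrix (with the same $q$) and each column of $M$ used by $T$ contains only $*$ in all rows of $M$ not used by $T$. *)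

theory Defs
  imports Main
begin

text \<open>Entries of a star pattern: None stands for the symbol *, Some a for a \<in> Z_q
  (represented by a natural number a < q).\<close>

type_synonym entry = "nat option"

definition is_point :: "nat \<Rightarrow> nat \<Rightarrow> nat list \<Rightarrow> bool" where
  "is_point q n x \<longleftrightarrow> length x = n \<and> (\<forall>i<n. x ! i < q)"

definition is_subcube :: "nat \<Rightarrow> nat \<Rightarrow> entry list \<Rightarrow> bool" where
  "is_subcube q n c \<longleftrightarrow> length c = n \<and> (\<forall>i<n. \<forall>a. c ! i = Some a \<longrightarrow> a < q)"

definition in_cube :: "nat list \<Rightarrow> entry list \<Rightarrow> bool" where
  "in_cube x c \<longleftrightarrow> (\<forall>i<length c. c ! i = None \<or> c ! i = Some (x ! i))"

definition cube_dim :: "entry list \<Rightarrow> nat" where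
  "cube_dim c = card {i. i < length c \<and> c ! i = None}"

definition is_partition_star_matrix :: "nat \<Rightarrow> nat \<Rightarrow> entry list list \<Rightarrow> bool" where
  "is_partition_star_matrix q n M \<longleftrightarrow>
     (\<forall>r<length M. is_subcube q n (M ! r)) \<and>
     (\<forall>x. is_point q n x \<longrightarrow> (\<exists>!r. r < length M \<and> in_cube x (M ! r)))"

fun frac_cols :: "nat \<Rightarrow> nat \<Rightarrow> nat" where
  "frac_cols q 0 = 0"
| "frac_cols q (Suc m) = 1 + q * frac_cols q m"

text \<open>The fractal matrix M_{q,m} as a function (row index, column index);
  rows 0..<q^m, columns 0..<frac_cols q m.  Block a consists of rows
  a*q^(m-1) ..< (a+1)*q^(m-1).\<close>
fun fractal :: "nat \<Rightarrow> nat \<Rightarrow> nat \<Rightarrow> nat \<Rightarrow> entry" where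
  "fractal q 0 r j = None"
| "fractal q (Suc m) r j =
     (let a = r div q ^ m; r' = r mod q ^ m in
      if j = 0 then Some a
      else (let b = (j - 1) div frac_cols q m; j' = (j - 1) mod frac_cols q m in
            if b = a then fractal q m r' j' else None))"

definition is_transfractal :: "nat \<Rightarrow> entry list list \<Rightarrow> nat set \<Rightarrow> nat set \<Rightarrow> bool" where
  "is_transfractal q M R C \<longleftrightarrow>
     (\<exists>m \<sigma> \<tau>. m \<ge> 1 \<and> bij_betw \<sigma> {0..<q ^ m} R \<and> bij_betw \<tau> {0..<frac_cols q m} C \<and>
        (\<forall>i<q ^ m. \<forall>j<frac_cols q m. M ! (\<sigma> i) ! (\<tau> j) = fractal q m i j)) \<and>
     (\<forall>j\<in>C. \<forall>r<length M. r \<notin> R \<longrightarrow> M ! r ! j = None)"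

end

theory Submission
  imports Defs
begin

lemma fractal_conflict:
  "i < q^m \<Longrightarrow> i' < q^m \<Longrightarrow> i \<noteq> i' \<Longrightarrow>
   \<exists>j < frac_cols q m. \<exists>a b. fractal q m i j = Some a \<and> fractal q m i' j = Some b \<and> a \<noteq> b"
proof (induction m arbitrary: i i')
  case 0
  then show ?case by simp
next
  case (Suc m)
  define a where "a = i div q^m"
  define a' where "a' = i' div q^m"
  show ?case
  proof (cases "a = a'")
    case False
    then show ?thesis unfolding a_def a'_def by (auto simp: Let_def)
  next
    case True
    have ri: "i = a * q^m + i mod q^m" "i' = a' * q^m + i' mod q^m"
      unfolding a_def a'_def by (simp_all add: div_mult_mod_eq)
    have qm: "q^m > 0" using Suc.prems by (cases "q^m = 0") auto
    have rne: "i mod q^m \<noteq> i' mod q^m" using ri True Suc.prems(3) by metis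
    from Suc.IH[OF mod_less_divisor[OF qm] mod_less_divisor[OF qm] rne]
    obtain j' x y where j': "j' < frac_cols q m" "fractal q m (i mod q^m) j' = Some x"
       "fractal q m (i' mod q^m) j' = Some y" "x \<noteq> y" by blast
    define fc where "fc = frac_cols q m"
    have aq: "a < q" unfolding a_def using Suc.prems(1)
      by (simp add: less_mult_imp_div_less mult.commute)
    have "a * fc + j' < a * fc + fc" using j' fc_def by simp
    also have "\<dots> \<le> q * fc" using aq
      by (metis add.commute mult_Suc mult_le_mono1 Suc_leI)
    finally have jlt: "Suc (a * fc + j') < frac_cols q (Suc m)" using fc_def by simp
    have d: "(a * fc + j') div fc = a" "(a * fc + j') mod fc = j'" using j' fc_def by simp_all
    show ?thesis
      apply (rule exI[of _ "Suc (a * fc + j')"])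
      using jlt d j' True unfolding a_def a'_def fc_def by (auto simp: Let_def)
  qed
qed

theorem lemma4:
  fixes q n :: nat and M :: "entry list list" and R C :: "nat set"
  assumes "is_partition_star_matrix q n M"
    and "\<forall>r1<length M. \<forall>r2<length M. cube_dim (M ! r1) = cube_dim (M ! r2)"
    and "R \<subseteq> {0..<length M}" and "C \<subseteq> {0..<n}"
    and "is_transfractal q M R C"
  shows "\<forall>s<n. s \<notin> C \<longrightarrow> (\<forall>r1\<in>R. \<forall>r2\<in>R. M ! r1 ! s = M ! r2 ! s)"
proof (intro allI impI ballI)
  fix s r1 r2 assume s: "s < n" "s \<notin> C" and r1: "r1 \<in> R" and r2: "r2 \<in> R"
  obtain m \<sigma> \<tau> where m: "m \<ge> 1" and bs: "bij_betw \<sigma> {0..<q ^ m} R"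
    and bt: "bij_betw \<tau> {0..<frac_cols q m} C"
    and fr: "\<forall>i<q ^ m. \<forall>j<frac_cols q m. M ! (\<sigma> i) ! (\<tau> j) = fractal q m i j"
    and out: "\<forall>j\<in>C. \<forall>r<length M. r \<notin> R \<longrightarrow> M ! r ! j = None"
    using assms(5) unfolding is_transfractal_def by blast
  have part: "\<And>r. r < length M \<Longrightarrow> is_subcube q n (M ! r)"
    and uniq: "\<And>x. is_point q n x \<Longrightarrow> \<exists>!r. r < length M \<and> in_cube x (M ! r)"
    using assms(1) unfolding is_partition_star_matrix_def by auto
  obtain i1 where i1: "i1 < q^m" "\<sigma> i1 = r1" using bs r1 unfolding bij_betw_def by auto
  obtain i2 where i2: "i2 < q^m" "\<sigma> i2 = r2" using bs r2 unfolding bij_betw_def by auto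
  have q0: "q > 0" using i1 m by (cases "q = 0") (auto simp: power_0_left split: if_splits)
  show "M ! r1 ! s = M ! r2 ! s"
  proof (rule ccontr)
    assume ne: "M ! r1 ! s \<noteq> M ! r2 ! s"
    have q2: "q \<noteq> 1" proof
      assume "q = 1" then have "i1 = i2" using i1 i2 by simp
      then show False using ne i1 i2 by simp
    qed
    have r1M: "r1 < length M" and r2M: "r2 < length M" using assms(3) r1 r2 by auto
    have main: False if A: "M ! ra ! s = Some a" "M ! rb ! s \<noteq> Some a"
      and ra: "ra \<in> R" and rb: "rb \<in> R" for ra rb a
    proof -
      have raM: "ra < length M" and rbM: "rb < length M" using assms(3) ra rb by auto
      obtain ia where ia: "ia < q^m" "\<sigma> ia = ra" using bs ra unfolding bij_betw_def by auto
      have sca: "is_subcube q n (M ! ra)" and scb: "is_subcube q n (M ! rb)"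
        using part raM rbM by auto
      obtain v where v: "v < q" "v \<noteq> a" "M ! rb ! s = None \<or> M ! rb ! s = Some v"
      proof (cases "M ! rb ! s")
        case None
        have "q \<ge> 2" using q0 q2 by simp
        show ?thesis
        proof (cases "a = 0")
          case True then show ?thesis using that[of 1] None \<open>q \<ge> 2\<close> by auto
        next
          case False then show ?thesis using that[of 0] None q0 by auto
        qed
      next
        case (Some b)
        then show ?thesis using that A scb s unfolding is_subcube_def by auto
      qed
      define pt where "pt r k = (case M ! r ! k of Some b \<Rightarrow> b | None \<Rightarrow> 0)" for r k
      have ptq: "pt r k < q" if "r < length M" "k < n" for r k
        using part[OF that(1)] that(2) q0 unfolding is_subcube_def pt_def
        by (cases "M ! r ! k") auto
      define xp where "xp r = map (\<lambda>k. if k = s then v else if k \<in> C then pt r k else pt rb k) [0..<n]" for r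
      have xpk: "xp r ! k = (if k = s then v else if k \<in> C then pt r k else pt rb k)" if "k < n" for r k
        using that unfolding xp_def by simp
      have xpp: "is_point q n (xp r)" if "r < length M" for r
        unfolding is_point_def using xpk ptq that rbM v by (auto simp: xp_def)
      have lens: "length (M ! r) = n" if "r < length M" for r
        using part[OF that] unfolding is_subcube_def by simp
      have inb: "in_cube (xp rb) (M ! rb)"
        unfolding in_cube_def
      proof (intro allI impI)
        fix k assume "k < length (M ! rb)"
        then have k: "k < n" using lens rbM by simp
        show "M ! rb ! k = None \<or> M ! rb ! k = Some (xp rb ! k)"
          using v(3) unfolding xpk[OF k] pt_def by (cases "M ! rb ! k") auto
      qed
      obtain r where r: "r < length M" "in_cube (xp ra) (M ! r)"
        using uniq[OF xpp[OF raM]] by blast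
      show False
      proof (cases "r \<in> R")
        case False
        have "in_cube (xp rb) (M ! r)"
          unfolding in_cube_def
        proof (intro allI impI)
          fix k assume kk: "k < length (M ! r)"
          then have k: "k < n" using lens r by simp
          show "M ! r ! k = None \<or> M ! r ! k = Some (xp rb ! k)"
          proof (cases "k \<in> C")
            case True then show ?thesis using out r False by auto
          next
            case False
            have "xp ra ! k = xp rb ! k" using xpk[OF k] False by simp
            then show ?thesis using r(2) kk unfolding in_cube_def by metis
          qed
        qed
        then have "r = rb" using uniq[OF xpp[OF rbM]] inb r rbM by blast
        then show False using False rb by simp
      next
        case True
        obtain i where i: "i < q^m" "\<sigma> i = r" using bs True unfolding bij_betw_def by auto
        show False
        proof (cases "i = ia")
          case True
          then have "r = ra" using i ia by simp
          have "xp ra ! s = v" using xpk[OF s(1)] by simp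
          moreover have "s < length (M ! ra)" using lens raM s by simp
          ultimately show False using r(2) \<open>r = ra\<close> A v unfolding in_cube_def by force
        next
          case False
          obtain j a' b' where j: "j < frac_cols q m" "fractal q m i j = Some a'"
            "fractal q m ia j = Some b'" "a' \<noteq> b'"
            using fractal_conflict[OF i(1) ia(1) False] by blast
          have tj: "\<tau> j \<in> C" using bt j(1) unfolding bij_betw_def by auto
          then have tjn: "\<tau> j < n" using assms(4) by auto
          have e1: "M ! r ! \<tau> j = Some a'" using fr i j by auto
          have e2: "M ! ra ! \<tau> j = Some b'" using fr ia j by auto
          have "xp ra ! \<tau> j = b'" using xpk[OF tjn] tj s e2 unfolding pt_def by auto
          then show False using r(2) e1 j(4) tjn lens[OF r(1)] unfolding in_cube_def by auto
        qed
      qed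
    qed
    show False
    proof (cases "M ! r1 ! s")
      case None
      then obtain a where "M ! r2 ! s = Some a" using ne by (cases "M ! r2 ! s") auto
      then show False using main[OF _ _ r2 r1] ne None by auto
    next
      case (Some a)
      then show False using main[OF _ _ r1 r2] ne by auto
    qed
  qed
qed

end
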